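(* Let $\mathbb{F}$ be a field and let $\mathcal{A}$, $\mathcal{B}$ be unital $\mathbb{F}$-algebras with $\mathcal{A}\neq\mathbb{F}$ and $\mathcal{B}\neq\mathbb{F}$. If the center of the free product $\mathcal{A}\ast\mathcal{B}$ (coproduct in the category of unital associative $\mathbb{F}$-algebras) is not reduced to $\mathbb{F}$, then $\dim_{\mathbb{F}}\mathcal{A}=\dim_{\mathbb{F}}\mathcal{B}=2$. *)

theory Defs
  imports Complex_Main
begin

text \<open>A unital associative algebra over a field 'f, carried by a type 'a of class ring_1
  (so 1 and the ring structure come from the type), with scalar multiplication sc.\<close>
definition unital_algebra :: "('f::field \<Rightarrow> 'a::ring_1 \<Rightarrow> 'a) \<Rightarrow> bool" where
  "unital_algebra sc \<longleftrightarrow> vector_space sc \<and>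
     (\<forall>c x y. sc c (x * y) = sc c x * y \<and> sc c (x * y) = x * sc c y)"

definition is_not_ground_field :: "('f::field \<Rightarrow> 'a::ring_1 \<Rightarrow> 'a) \<Rightarrow> bool" where
  "is_not_ground_field sc \<longleftrightarrow> (\<exists>x. \<forall>c. x \<noteq> sc c 1)"

text \<open>Noncommutative polynomials over 'f in the symbols 's: functions from words to coefficients,
  restricted to finite support where needed.\<close>
type_synonym ('s, 'f) ncpoly = "'s list \<Rightarrow> 'f"

definition ncfin :: "('s, 'f::zero) ncpoly \<Rightarrow> bool" where
  "ncfin p \<longleftrightarrow> finite {w. p w \<noteq> 0}"

definition ncmono :: "'s list \<Rightarrow> ('s, 'f::{zero,one}) ncpoly" where
  "ncmono w = (\<lambda>v. if v = w then 1 else 0)"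

definition ncgen :: "'s \<Rightarrow> ('s, 'f::{zero,one}) ncpoly" where
  "ncgen s = ncmono [s]"

definition ncadd :: "('s, 'f::plus) ncpoly \<Rightarrow> ('s, 'f) ncpoly \<Rightarrow> ('s, 'f) ncpoly" where
  "ncadd p q = (\<lambda>w. p w + q w)"

definition ncsub :: "('s, 'f::minus) ncpoly \<Rightarrow> ('s, 'f) ncpoly \<Rightarrow> ('s, 'f) ncpoly" where
  "ncsub p q = (\<lambda>w. p w - q w)"

definition ncsmult :: "'f::times \<Rightarrow> ('s, 'f) ncpoly \<Rightarrow> ('s, 'f) ncpoly" where
  "ncsmult c p = (\<lambda>w. c * p w)"

definition ncmul :: "('s, 'f::comm_semiring_0) ncpoly \<Rightarrow> ('s, 'f) ncpoly \<Rightarrow> ('s, 'f) ncpoly" where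
  "ncmul p q = (\<lambda>w. \<Sum>(u, v) \<in> {(u, v). u @ v = w}. p u * q v)"

text \<open>Defining relations of the free product A * B as a quotient of the free algebra
  F<A \<uplus> B> on the disjoint union of the underlying sets.\<close>
definition fp_relations ::
  "('f::field \<Rightarrow> 'a::ring_1 \<Rightarrow> 'a) \<Rightarrow> ('f \<Rightarrow> 'b::ring_1 \<Rightarrow> 'b) \<Rightarrow> (('a + 'b), 'f) ncpoly set" where
  "fp_relations sA sB =
     {ncsub (ncgen (Inl (x + y))) (ncadd (ncgen (Inl x)) (ncgen (Inl y))) | x y. True} \<union>
     {ncsub (ncgen (Inl (sA c x))) (ncsmult c (ncgen (Inl x))) | c x. True} \<union>
     {ncsub (ncgen (Inl (x * y))) (ncmul (ncgen (Inl x)) (ncgen (Inl y))) | x y. True} \<union>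
     {ncsub (ncgen (Inl 1)) (ncmono []) } \<union>
     {ncsub (ncgen (Inr (x + y))) (ncadd (ncgen (Inr x)) (ncgen (Inr y))) | x y. True} \<union>
     {ncsub (ncgen (Inr (sB c x))) (ncsmult c (ncgen (Inr x))) | c x. True} \<union>
     {ncsub (ncgen (Inr (x * y))) (ncmul (ncgen (Inr x)) (ncgen (Inr y))) | x y. True} \<union>
     {ncsub (ncgen (Inr 1)) (ncmono []) }"

inductive_set nc_ideal :: "('s, 'f::field) ncpoly set \<Rightarrow> ('s, 'f) ncpoly set"
  for R :: "('s, 'f) ncpoly set" where
  gen: "r \<in> R \<Longrightarrow> r \<in> nc_ideal R"
| zero: "(\<lambda>w. 0) \<in> nc_ideal R"
| add: "p \<in> nc_ideal R \<Longrightarrow> q \<in> nc_ideal R \<Longrightarrow> ncadd p q \<in> nc_ideal R"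
| lmul: "p \<in> nc_ideal R \<Longrightarrow> ncfin a \<Longrightarrow> ncmul a p \<in> nc_ideal R"
| rmul: "p \<in> nc_ideal R \<Longrightarrow> ncfin a \<Longrightarrow> ncmul p a \<in> nc_ideal R"

definition fp_ideal ::
  "('f::field \<Rightarrow> 'a::ring_1 \<Rightarrow> 'a) \<Rightarrow> ('f \<Rightarrow> 'b::ring_1 \<Rightarrow> 'b) \<Rightarrow> (('a + 'b), 'f) ncpoly set" where
  "fp_ideal sA sB = nc_ideal (fp_relations sA sB)"

definition free_product_center_nontrivial ::
  "('f::field \<Rightarrow> 'a::ring_1 \<Rightarrow> 'a) \<Rightarrow> ('f \<Rightarrow> 'b::ring_1 \<Rightarrow> 'b) \<Rightarrow> bool" where
  "free_product_center_nontrivial sA sB \<longleftrightarrow>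
     (\<exists>z. ncfin z \<and>
        (\<forall>q. ncfin q \<longrightarrow> ncsub (ncmul z q) (ncmul q z) \<in> fp_ideal sA sB) \<and>
        (\<forall>c. ncsub z (ncsmult c (ncmono [])) \<notin> fp_ideal sA sB))"

end

theory Submission
  imports Defs
begin


section \<open>Free algebra basics\<close>

lemma spl_eq: "{(u, v). u @ v = w} = (\<lambda>i. (take i w, drop i w)) ` {..length w}"
proof (rule set_eqI, rule iffI)
  fix x assume "x \<in> {(u, v). u @ v = w}"
  then obtain u v where x: "x = (u, v)" "u @ v = w" by auto
  then show "x \<in> (\<lambda>i. (take i w, drop i w)) ` {..length w}"
    by (auto intro!: image_eqI[of _ _ "length u"])
qed auto

lemma finite_spl[simp]: "finite {(u, v). u @ v = w}"
  by (simp add: spl_eq)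

definition supp :: "('s, 'f::zero) ncpoly \<Rightarrow> 's list set" where
  "supp p = {w. p w \<noteq> 0}"

lemma ncfin_supp: "ncfin p \<longleftrightarrow> finite (supp p)"
  by (simp add: ncfin_def supp_def)

lemma ncmono_apply: "ncmono u w = (if w = u then 1 else 0)"
  by (simp add: ncmono_def)

lemma ncfin_mono[simp]: "ncfin (ncmono u)"
  by (simp add: ncfin_def ncmono_def)

lemma ncfin_gen[simp]: "ncfin (ncgen s)"
  by (simp add: ncgen_def)

lemma ncfin_zero[simp]: "ncfin (\<lambda>w. 0)"
  by (simp add: ncfin_def)

lemma ncfin_add[simp]: "ncfin p \<Longrightarrow> ncfin q \<Longrightarrow> ncfin (ncadd p (q::('s,'f::monoid_add) ncpoly))"
  unfolding ncfin_def ncadd_def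
  by (rule finite_subset[of _ "{w. p w \<noteq> 0} \<union> {w. q w \<noteq> 0}"]) auto

lemma ncfin_sub[simp]: "ncfin p \<Longrightarrow> ncfin q \<Longrightarrow> ncfin (ncsub p (q::('s,'f::group_add) ncpoly))"
  unfolding ncfin_def ncsub_def
  by (rule finite_subset[of _ "{w. p w \<noteq> 0} \<union> {w. q w \<noteq> 0}"]) auto

lemma ncfin_smult[simp]: "ncfin p \<Longrightarrow> ncfin (ncsmult c (p::('s,'f::field) ncpoly))"
  unfolding ncfin_def ncsmult_def
  by (rule finite_subset[of _ "{w. p w \<noteq> 0}"]) auto

lemma ncfin_sum:
  assumes "finite T" "\<And>i. i \<in> T \<Longrightarrow> ncfin (f i)"
  shows "ncfin (\<lambda>x. \<Sum>i\<in>T. (k i :: 'f::field) * f i x)"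
  using assms
proof (induction T rule: finite_induct)
  case empty then show ?case by simp
next
  case (insert a T)
  have "ncfin (ncadd (ncsmult (k a) (f a)) (\<lambda>x. \<Sum>i\<in>T. k i * f i x))"
    using insert by simp
  then show ?case using insert by (simp add: ncadd_def ncsmult_def)
qed

lemma ncmul_apply: "ncmul p q w = (\<Sum>(u, v)\<in>{(u, v). u @ v = w}. p u * q v)"
  by (simp add: ncmul_def)

lemma ncfin_mul[simp]:
  assumes "ncfin p" "ncfin q" shows "ncfin (ncmul p q)"
proof -
  have "{w. ncmul p q w \<noteq> 0} \<subseteq> (\<lambda>(u, v). u @ v) ` ({u. p u \<noteq> 0} \<times> {v. q v \<noteq> 0})"
  proof
    fix w assume "w \<in> {w. ncmul p q w \<noteq> 0}"
    then have "(\<Sum>(u, v)\<in>{(u, v). u @ v = w}. p u * q v) \<noteq> 0" by (simp add: ncmul_def)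
    then obtain x where "x \<in> {(u, v). u @ v = w}" "(case x of (u, v) \<Rightarrow> p u * q v) \<noteq> 0"
      by (meson sum.not_neutral_contains_not_neutral)
    then obtain u v where "u @ v = w" "p u * q v \<noteq> 0" by auto
    then show "w \<in> (\<lambda>(u, v). u @ v) ` ({u. p u \<noteq> 0} \<times> {v. q v \<noteq> 0})" by force
  qed
  then show ?thesis using assms unfolding ncfin_def by (meson finite_SigmaI finite_imageI finite_subset)
qed

lemma ncmul_mono_mono: "ncmul (ncmono u) (ncmono v) = (ncmono (u @ v) :: ('s, 'f::comm_semiring_1) ncpoly)"
proof (rule ext)
  fix w
  have "ncmul (ncmono u) (ncmono v) w = (\<Sum>x\<in>{(a, b). a @ b = w}. if x = (u, v) then (1::'f) else 0)"
    unfolding ncmul_def ncmono_def by (intro sum.cong) (auto split: if_splits)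
  also have "\<dots> = (if w = u @ v then 1 else 0)"
    by (subst sum.delta) auto
  finally show "ncmul (ncmono u) (ncmono v) w = (ncmono (u @ v) :: ('s, 'f) ncpoly) w"
    by (simp add: ncmono_def)
qed

lemma ncmul_gen_mono: "ncmul (ncgen l) (ncmono v) = (ncmono (l # v) :: ('s, 'f::comm_semiring_1) ncpoly)"
  by (simp add: ncgen_def ncmul_mono_mono)

lemma ncmul_gen_gen: "ncmul (ncgen l) (ncgen l') = (ncmono [l, l'] :: ('s, 'f::comm_semiring_1) ncpoly)"
  by (simp add: ncgen_def ncmul_mono_mono)

lemma ncmul_e_left: "ncmul (ncmono []) p = (p :: ('s, 'f::comm_semiring_1) ncpoly)"
proof (rule ext)
  fix w
  have "ncmul (ncmono []) p w = (\<Sum>x\<in>{(a, b). a @ b = w}. if x = ([], w) then p w else 0)"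
    unfolding ncmul_def ncmono_def by (intro sum.cong) (auto split: if_splits)
  also have "\<dots> = p w" by (subst sum.delta) auto
  finally show "ncmul (ncmono []) p w = p w" .
qed

lemma ncmul_add_left: "ncmul (ncadd p q) r = ncadd (ncmul p r) (ncmul q r)"
  unfolding ncmul_def ncadd_def by (auto simp: case_prod_unfold distrib_right sum.distrib)

lemma ncmul_add_right: "ncmul r (ncadd p q) = ncadd (ncmul r p) (ncmul r q)"
  unfolding ncmul_def ncadd_def by (auto simp: case_prod_unfold distrib_left sum.distrib)

lemma ncmul_sub_left: "ncmul (ncsub p q) r = ncsub (ncmul p r) (ncmul q (r::('s,'f::comm_ring) ncpoly))"
  unfolding ncmul_def ncsub_def by (auto simp: case_prod_unfold left_diff_distrib sum_subtractf)

lemma ncmul_sub_right: "ncmul r (ncsub p q) = ncsub (ncmul r p) (ncmul r (q::('s,'f::comm_ring) ncpoly))"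
  unfolding ncmul_def ncsub_def by (auto simp: case_prod_unfold right_diff_distrib sum_subtractf)

lemma ncmul_smult_left: "ncmul (ncsmult c p) r = ncsmult c (ncmul p (r::('s,'f::comm_semiring_0) ncpoly))"
  unfolding ncmul_def ncsmult_def by (auto simp: case_prod_unfold sum_distrib_left mult.assoc)

lemma ncmul_smult_right: "ncmul r (ncsmult c p) = ncsmult c (ncmul r (p::('s,'f::comm_semiring_0) ncpoly))"
  unfolding ncmul_def ncsmult_def by (auto simp: case_prod_unfold sum_distrib_left mult.left_commute)

lemma ncmul_sum_left:
  "ncmul (\<lambda>x. \<Sum>i\<in>T. k i * f i x) r = (\<lambda>x. \<Sum>i\<in>T. k i * ncmul (f i) (r::('s,'f::comm_semiring_0) ncpoly) x)"
proof (rule ext)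
  fix w
  have "ncmul (\<lambda>x. \<Sum>i\<in>T. k i * f i x) r w = (\<Sum>p\<in>{(u, v). u @ v = w}. \<Sum>i\<in>T. k i * (f i (fst p) * r (snd p)))"
    unfolding ncmul_def case_prod_unfold by (simp add: sum_distrib_right mult.assoc)
  also have "\<dots> = (\<Sum>i\<in>T. \<Sum>p\<in>{(u, v). u @ v = w}. k i * (f i (fst p) * r (snd p)))"
    by (rule sum.swap)
  also have "\<dots> = (\<Sum>i\<in>T. k i * ncmul (f i) r w)"
    unfolding ncmul_def case_prod_unfold by (simp add: sum_distrib_left)
  finally show "ncmul (\<lambda>x. \<Sum>i\<in>T. k i * f i x) r w = (\<Sum>i\<in>T. k i * ncmul (f i) r w)" .
qed

lemma ncmul_sum_right:
  "ncmul r (\<lambda>x. \<Sum>i\<in>T. k i * f i x) = (\<lambda>x. \<Sum>i\<in>T. k i * ncmul r (f i::('s,'f::comm_semiring_0) ncpoly) x)"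
proof (rule ext)
  fix w
  have "ncmul r (\<lambda>x. \<Sum>i\<in>T. k i * f i x) w = (\<Sum>p\<in>{(u, v). u @ v = w}. \<Sum>i\<in>T. k i * (r (fst p) * f i (snd p)))"
    unfolding ncmul_def case_prod_unfold by (simp add: sum_distrib_left mult.left_commute)
  also have "\<dots> = (\<Sum>i\<in>T. \<Sum>p\<in>{(u, v). u @ v = w}. k i * (r (fst p) * f i (snd p)))"
    by (rule sum.swap)
  also have "\<dots> = (\<Sum>i\<in>T. k i * ncmul r (f i) w)"
    unfolding ncmul_def case_prod_unfold by (simp add: sum_distrib_left)
  finally show "ncmul r (\<lambda>x. \<Sum>i\<in>T. k i * f i x) w = (\<Sum>i\<in>T. k i * ncmul r (f i) w)" .
qed

lemma poly_expand: "ncfin (p::('s,'f::semiring_1) ncpoly) \<Longrightarrow> p = (\<lambda>x. \<Sum>w\<in>supp p. p w * ncmono w x)"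
proof (rule ext)
  fix x assume "ncfin p"
  have "(\<Sum>w\<in>supp p. p w * ncmono w x) = (\<Sum>w\<in>supp p. if w = x then p x else 0)"
    by (intro sum.cong) (auto simp: ncmono_def split: if_splits)
  also have "\<dots> = p x" using \<open>ncfin p\<close> by (subst sum.delta) (auto simp: ncfin_supp supp_def)
  finally show "p x = (\<Sum>w\<in>supp p. p w * ncmono w x)" by simp
qed

section \<open>Ideals\<close>

context fixes Rel :: "('s, 'f::field) ncpoly set"
begin

lemma I_smult: "p \<in> nc_ideal Rel \<Longrightarrow> ncsmult c p \<in> nc_ideal Rel"
proof -
  assume "p \<in> nc_ideal Rel"
  then have "ncmul (ncsmult c (ncmono [])) p \<in> nc_ideal Rel"
    by (intro nc_ideal.lmul) auto
  then show ?thesis by (simp add: ncmul_smult_left ncmul_e_left)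
qed

lemma I_sub: "p \<in> nc_ideal Rel \<Longrightarrow> q \<in> nc_ideal Rel \<Longrightarrow> ncsub p q \<in> nc_ideal Rel"
proof -
  assume "p \<in> nc_ideal Rel" "q \<in> nc_ideal Rel"
  then have "ncadd p (ncsmult (-1) q) \<in> nc_ideal Rel" by (intro nc_ideal.add I_smult)
  then show ?thesis by (simp add: ncadd_def ncsmult_def ncsub_def)
qed

lemma I_sum:
  assumes "finite T" "\<And>i. i \<in> T \<Longrightarrow> f i \<in> nc_ideal Rel"
  shows "(\<lambda>x. \<Sum>i\<in>T. k i * f i x) \<in> nc_ideal Rel"
  using assms
proof (induction T rule: finite_induct)
  case empty then show ?case by (simp add: nc_ideal.zero)
next
  case (insert a T)
  have "ncadd (ncsmult (k a) (f a)) (\<lambda>x. \<Sum>i\<in>T. k i * f i x) \<in> nc_ideal Rel"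
    using insert by (intro nc_ideal.add I_smult) auto
  then show ?case using insert by (simp add: ncadd_def ncsmult_def)
qed

lemma I_fin: assumes "\<And>r. r \<in> Rel \<Longrightarrow> ncfin r" shows "p \<in> nc_ideal Rel \<Longrightarrow> ncfin p"
  by (induction p rule: nc_ideal.induct) (auto simp: assms)

definition ideq :: "('s, 'f) ncpoly \<Rightarrow> ('s, 'f) ncpoly \<Rightarrow> bool" where
  "ideq p q \<longleftrightarrow> ncsub p q \<in> nc_ideal Rel"

lemma ideq_refl: "ideq p p"
proof -
  have "ncsub p p = (\<lambda>w. 0)" by (simp add: ncsub_def)
  then show ?thesis by (simp add: ideq_def nc_ideal.zero)
qed

lemma ideq_sym: "ideq p q \<Longrightarrow> ideq q p"
proof -
  assume "ideq p q"
  then have "ncsmult (-1) (ncsub p q) \<in> nc_ideal Rel" unfolding ideq_def by (rule I_smult)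
  moreover have "ncsmult (-1) (ncsub p q) = ncsub q p" by (auto simp: ncsmult_def ncsub_def)
  ultimately show ?thesis by (simp add: ideq_def)
qed

lemma ideq_trans: "ideq p q \<Longrightarrow> ideq q r \<Longrightarrow> ideq p r"
proof -
  assume "ideq p q" "ideq q r"
  then have "ncadd (ncsub p q) (ncsub q r) \<in> nc_ideal Rel" unfolding ideq_def by (rule nc_ideal.add)
  moreover have "ncadd (ncsub p q) (ncsub q r) = ncsub p r" by (auto simp: ncadd_def ncsub_def)
  ultimately show ?thesis by (simp add: ideq_def)
qed

lemma ideq_lmul: "ideq p q \<Longrightarrow> ncfin a \<Longrightarrow> ideq (ncmul a p) (ncmul a q)"
  unfolding ideq_def by (metis ncmul_sub_right nc_ideal.lmul)

lemma ideq_rmul: "ideq p q \<Longrightarrow> ncfin a \<Longrightarrow> ideq (ncmul p a) (ncmul q a)"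
  unfolding ideq_def by (metis ncmul_sub_left nc_ideal.rmul)

lemma ideq_sum:
  assumes "finite T" "\<And>i. i \<in> T \<Longrightarrow> ideq (f i) (g i)"
  shows "ideq (\<lambda>x. \<Sum>i\<in>T. k i * f i x) (\<lambda>x. \<Sum>i\<in>T. k i * g i x)"
proof -
  have "(\<lambda>x. \<Sum>i\<in>T. k i * ncsub (f i) (g i) x) \<in> nc_ideal Rel"
    using assms by (intro I_sum) (auto simp: ideq_def)
  moreover have "(\<lambda>x. \<Sum>i\<in>T. k i * ncsub (f i) (g i) x) = ncsub (\<lambda>x. \<Sum>i\<in>T. k i * f i x) (\<lambda>x. \<Sum>i\<in>T. k i * g i x)"
    by (auto simp: ncsub_def right_diff_distrib sum_subtractf)
  ultimately show ?thesis by (simp add: ideq_def)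
qed

lemma ideq_add: "ideq p q \<Longrightarrow> ideq p' q' \<Longrightarrow> ideq (ncadd p p') (ncadd q q')"
proof -
  assume "ideq p q" "ideq p' q'"
  then have "ncadd (ncsub p q) (ncsub p' q') \<in> nc_ideal Rel" unfolding ideq_def by (rule nc_ideal.add)
  moreover have "ncadd (ncsub p q) (ncsub p' q') = ncsub (ncadd p p') (ncadd q q')"
    by (auto simp: ncadd_def ncsub_def)
  ultimately show ?thesis by (simp add: ideq_def)
qed

lemma ideq_smult: "ideq p q \<Longrightarrow> ideq (ncsmult c p) (ncsmult c q)"
proof -
  assume "ideq p q"
  then have "ncsmult c (ncsub p q) \<in> nc_ideal Rel" unfolding ideq_def by (rule I_smult)
  moreover have "ncsmult c (ncsub p q) = ncsub (ncsmult c p) (ncsmult c q)"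
    by (auto simp: ncsmult_def ncsub_def right_diff_distrib)
  ultimately show ?thesis by (simp add: ideq_def)
qed

end



definition valt :: "('l list \<Rightarrow> bool) \<Rightarrow> ('l, 'f::zero) ncpoly \<Rightarrow> bool" where
  "valt good v \<longleftrightarrow> ncfin v \<and> (\<forall>w. v w \<noteq> 0 \<longrightarrow> good w)"

lemma valt_zero[simp]: "valt good (\<lambda>w. 0)" by (simp add: valt_def)

lemma valt_mono: "good w \<Longrightarrow> valt good (ncmono w :: ('l, 'f::zero_neq_one) ncpoly)"
  unfolding valt_def by (auto simp: ncmono_apply)

lemma valt_add: assumes "valt good v" "valt good v'" shows "valt good (ncadd v (v'::('l,'f::monoid_add) ncpoly))"
proof -
  have "ncfin (ncadd v v')" using assms by (simp add: valt_def)
  moreover have "\<forall>w. ncadd v v' w \<noteq> 0 \<longrightarrow> good w" using assms unfolding valt_def ncadd_def by (metis add.right_neutral)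
  ultimately show ?thesis by (simp add: valt_def)
qed

lemma valt_smult: assumes "valt good v" shows "valt good (ncsmult k (v::('l,'f::field) ncpoly))"
proof -
  have "ncfin (ncsmult k v)" using assms by (simp add: valt_def)
  moreover have "\<forall>w. ncsmult k v w \<noteq> 0 \<longrightarrow> good w" using assms by (auto simp: valt_def ncsmult_def)
  ultimately show ?thesis by (simp add: valt_def)
qed

lemma valt_sum:
  assumes "finite T" "\<And>i. i \<in> T \<Longrightarrow> valt good (f i)"
  shows "valt good (\<lambda>x. \<Sum>i\<in>T. (k i :: 'f::field) * f i x)"
  using assms
proof (induction T rule: finite_induct)
  case empty then show ?case by simp
next
  case (insert a T)
  have "valt good (ncadd (ncsmult (k a) (f a)) (\<lambda>x. \<Sum>i\<in>T. k i * f i x))"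
    using insert by (intro valt_add valt_smult) auto
  then show ?case using insert by (simp add: ncadd_def ncsmult_def)
qed

lemma valt_fin: "valt good v \<Longrightarrow> ncfin v" by (simp add: valt_def)
lemma valt_good: "valt good v \<Longrightarrow> v w \<noteq> 0 \<Longrightarrow> good w" by (simp add: valt_def)

locale side = vector_space sc for sc :: "'f::field \<Rightarrow> 'c::ring_1 \<Rightarrow> 'c" +
  fixes X :: "'c set" and emb :: "'c \<Rightarrow> 'l" and S :: "'l \<Rightarrow> bool" and good :: "'l list \<Rightarrow> bool"
    and Rel :: "('l, 'f) ncpoly set"
  assumes scmul1: "sc k (x * y) = sc k x * y" and scmul2: "sc k (x * y) = x * sc k y"
  and indep: "independent (insert 1 X)" and spanU: "span (insert 1 X) = UNIV" and oneX: "1 \<notin> X"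
  and emb_inj: "inj emb" and S_emb: "S (emb c)"
  and good_cons: "S l \<Longrightarrow> good (l # u) \<longleftrightarrow> (\<exists>y\<in>X. l = emb y) \<and> good u \<and> (u = [] \<or> \<not> S (hd u))"
  and rel_add: "ncsub (ncgen (emb (x + y))) (ncadd (ncgen (emb x)) (ncgen (emb y))) \<in> nc_ideal Rel"
  and rel_sc: "ncsub (ncgen (emb (sc k x))) (ncsmult k (ncgen (emb x))) \<in> nc_ideal Rel"
  and rel_mul: "ncsub (ncgen (emb (x * y))) (ncmul (ncgen (emb x)) (ncgen (emb y))) \<in> nc_ideal Rel"
  and rel_one: "ncsub (ncgen (emb 1)) (ncmono []) \<in> nc_ideal Rel"
begin

definition R :: "'c \<Rightarrow> 'c \<Rightarrow> 'f" where "R a = representation (insert 1 X) a"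
definition comb :: "('c \<Rightarrow> 'f) \<Rightarrow> 'c" where
  "comb f = sc (f 1) 1 + (\<Sum>y\<in>{y\<in>X. f y \<noteq> 0}. sc (f y) y)"
definition base :: "'l list \<Rightarrow> bool" where "base u \<longleftrightarrow> good u \<and> (u = [] \<or> \<not> S (hd u))"
definition coef :: "('l, 'f) ncpoly \<Rightarrow> 'l list \<Rightarrow> 'c \<Rightarrow> 'f" where
  "coef v u = (\<lambda>c. if c = 1 then v u else v (emb c # u))"
definition fib :: "('l, 'f) ncpoly \<Rightarrow> 'l list \<Rightarrow> 'c" where "fib v u = comb (coef v u)"
definition act :: "'c \<Rightarrow> ('l, 'f) ncpoly \<Rightarrow> ('l, 'f) ncpoly" where
  "act a v = (\<lambda>w. if base w then R (a * fib v w) 1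
     else if good w \<and> w \<noteq> [] then R (a * fib v (tl w)) (inv emb (hd w)) else 0)"

lemma R_ne: "R a b \<noteq> 0 \<Longrightarrow> b \<in> insert 1 X"
  unfolding R_def by (rule representation_ne_zero)

lemma R_fin: "finite {b. R a b \<noteq> 0}"
  unfolding R_def by (rule finite_representation)

lemma R_add: "R (a + b) c = R a c + R b c"
  unfolding R_def using representation_add[OF indep, of b a] spanU by simp

lemma R_scale: "R (sc k a) c = k * R a c"
  unfolding R_def using representation_scale[OF indep, of a k] spanU by simp

lemma R_zero: "R 0 c = 0"
  unfolding R_def by (simp add: representation_zero)

lemma R_sum: "R (\<Sum>i\<in>T. g i) c = (\<Sum>i\<in>T. R (g i) c)"
  unfolding R_def using representation_sum[OF indep, of T g] spanU by simp

lemma R_basis: "b \<in> insert 1 X \<Longrightarrow> R b c = (if c = b then 1 else 0)"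
  unfolding R_def using representation_basis[OF indep] by simp

lemma inv_emb[simp]: "inv emb (emb y) = y"
  using emb_inj by simp

lemma comb_sum:
  assumes "finite T" "{y\<in>X. f y \<noteq> 0} \<subseteq> T" "T \<subseteq> X"
  shows "comb f = sc (f 1) 1 + (\<Sum>y\<in>T. sc (f y) y)"
proof -
  have "(\<Sum>y\<in>{y\<in>X. f y \<noteq> 0}. sc (f y) y) = (\<Sum>y\<in>T. sc (f y) y)"
    using assms by (intro sum.mono_neutral_left) auto
  then show ?thesis by (simp add: comb_def)
qed

lemma comb_R: "comb (R m) = m"
proof -
  let ?T = "{y\<in>X. R m y \<noteq> 0}"
  have fT: "finite ?T" using R_fin by (rule rev_finite_subset) auto
  have "(\<Sum>b | R m b \<noteq> 0. sc (R m b) b) = m"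
    unfolding R_def using sum_nonzero_representation_eq[OF indep] spanU by simp
  moreover have "(\<Sum>b | R m b \<noteq> 0. sc (R m b) b) = (\<Sum>b\<in>insert 1 ?T. sc (R m b) b)"
    using fT R_ne by (intro sum.mono_neutral_left) auto
  moreover have "(\<Sum>b\<in>insert 1 ?T. sc (R m b) b) = sc (R m 1) 1 + (\<Sum>y\<in>?T. sc (R m y) y)"
    using fT oneX by (subst sum.insert) auto
  ultimately show ?thesis by (simp add: comb_def)
qed

lemma comb_cong: "(\<And>b. b \<in> insert 1 X \<Longrightarrow> f b = g b) \<Longrightarrow> comb f = comb g"
proof -
  assume h: "\<And>b. b \<in> insert 1 X \<Longrightarrow> f b = g b"
  then have "{y\<in>X. f y \<noteq> 0} = {y\<in>X. g y \<noteq> 0}" by auto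
  then show ?thesis unfolding comb_def using h by (auto intro!: sum.cong)
qed

lemma comb_zero: "comb (\<lambda>b. 0) = 0"
  by (simp add: comb_def)

lemma R_comb:
  assumes fin: "finite {y\<in>X. f y \<noteq> 0}"
  shows "R (comb f) b = (if b \<in> insert 1 X then f b else 0)"
proof -
  let ?T = "{y\<in>X. f y \<noteq> 0}"
  have "R (comb f) b = f 1 * R 1 b + (\<Sum>y\<in>?T. f y * R y b)"
    unfolding comb_def by (simp add: R_add R_scale R_sum)
  also have "\<dots> = f 1 * (if b = 1 then 1 else 0) + (\<Sum>y\<in>?T. if b = y then f y else 0)"
    by (auto simp: R_basis intro!: sum.cong)
  also have "\<dots> = (if b \<in> insert 1 X then f b else 0)"
    using fin oneX by (auto simp: sum.delta')
  finally show ?thesis .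
qed

lemma comb_add:
  assumes "finite {y\<in>X. f y \<noteq> 0}" "finite {y\<in>X. g y \<noteq> 0}"
  shows "comb (\<lambda>b. f b + g b) = comb f + comb g"
proof -
  let ?T = "{y\<in>X. f y \<noteq> 0} \<union> {y\<in>X. g y \<noteq> 0}"
  have fT: "finite ?T" using assms by simp
  have "comb (\<lambda>b. f b + g b) = sc (f 1 + g 1) 1 + (\<Sum>y\<in>?T. sc (f y + g y) y)"
    using fT by (intro comb_sum) auto
  also have "\<dots> = (sc (f 1) 1 + (\<Sum>y\<in>?T. sc (f y) y)) + (sc (g 1) 1 + (\<Sum>y\<in>?T. sc (g y) y))"
    by (simp add: scale_left_distrib sum.distrib algebra_simps)
  also have "\<dots> = comb f + comb g"
    using fT by (subst (1 2) comb_sum[symmetric]) auto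
  finally show ?thesis .
qed

lemma comb_scale: "comb (\<lambda>b. k * f b) = sc k (comb f)"
proof (cases "k = 0")
  case True then show ?thesis by (simp add: comb_zero)
next
  case False
  then have "{y\<in>X. k * f y \<noteq> 0} = {y\<in>X. f y \<noteq> 0}" by auto
  then show ?thesis using False by (simp add: comb_def scale_right_distrib scale_sum_right)
qed

lemma good_nonbase: "good w \<Longrightarrow> \<not> base w \<Longrightarrow> w \<noteq> [] \<and> S (hd w)"
  by (auto simp: base_def)

lemma good_S_cons: "good (l # u) \<Longrightarrow> S l \<Longrightarrow> \<exists>y\<in>X. l = emb y \<and> base u"
  using good_cons by (auto simp: base_def)

lemma base_emb_cons: "y \<in> X \<Longrightarrow> base u \<Longrightarrow> good (emb y # u) \<and> \<not> base (emb y # u)"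
  using good_cons[OF S_emb] S_emb by (auto simp: base_def)

lemma base_not_emb: "base u \<Longrightarrow> u \<noteq> emb y # w"
  using S_emb by (auto simp: base_def)

lemma valt_fin_fiber: "valt good v \<Longrightarrow> finite {y\<in>X. v (emb y # u) \<noteq> 0}"
proof -
  assume "valt good v"
  then have "finite {w. v w \<noteq> 0}" by (simp add: valt_def ncfin_def)
  then have "finite ((\<lambda>y. emb y # u) -` {w. v w \<noteq> 0})"
    by (rule finite_vimageI) (use emb_inj in \<open>auto simp: inj_def\<close>)
  then show ?thesis by (rule rev_finite_subset) auto
qed

lemma coef_fin: "valt good v \<Longrightarrow> finite {y\<in>X. coef v u y \<noteq> 0}"
proof -
  assume "valt good v"
  have "{y\<in>X. coef v u y \<noteq> 0} = {y\<in>X. v (emb y # u) \<noteq> 0}"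
    using oneX by (auto simp: coef_def)
  then show ?thesis using valt_fin_fiber[OF \<open>valt good v\<close>] by simp
qed

lemma R_fib: "valt good v \<Longrightarrow> R (fib v u) b = (if b \<in> insert 1 X then coef v u b else 0)"
  unfolding fib_def by (rule R_comb[OF coef_fin])

lemma act_base: "base w \<Longrightarrow> act a v w = R (a * fib v w) 1"
  by (simp add: act_def)

lemma act_cons: "y \<in> X \<Longrightarrow> base u \<Longrightarrow> act a v (emb y # u) = R (a * fib v u) y"
  using base_emb_cons[of y u] by (simp add: act_def)

lemma act_bad: "\<not> good w \<Longrightarrow> act a v w = 0"
  by (simp add: act_def base_def)

lemma fib_act: "base u \<Longrightarrow> fib (act a v) u = a * fib v u"
proof -
  assume b: "base u"
  have "fib (act a v) u = comb (R (a * fib v u))"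
    unfolding fib_def[of "act a v"]
  proof (rule comb_cong)
    fix c assume "c \<in> insert 1 X"
    then show "coef (act a v) u c = R (a * fib v u) c"
      using b oneX by (auto simp: coef_def act_base act_cons)
  qed
  then show ?thesis by (simp add: comb_R)
qed

lemma act_cong:
  assumes "\<And>u. base u \<Longrightarrow> a * fib v u = a' * fib v' u"
  shows "act a v = act a' v'"
proof (rule ext)
  fix w
  show "act a v w = act a' v' w"
  proof (cases "base w")
    case True then show ?thesis using assms by (simp add: act_base)
  next
    case nb: False
    show ?thesis
    proof (cases "good w")
      case True
      with nb obtain l u where w: "w = l # u" "S l" by (metis good_nonbase list.collapse)
      with True good_S_cons obtain y where "y \<in> X" "l = emb y" "base u" by blast
      then show ?thesis using w assms by (simp add: act_cons)
    qed (simp add: act_bad)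
  qed
qed

lemma act_one: "valt good v \<Longrightarrow> act 1 v = v"
proof (rule ext)
  fix w assume v: "valt good v"
  show "act 1 v w = v w"
  proof (cases "base w")
    case True then show ?thesis using v by (simp add: act_base R_fib coef_def)
  next
    case nb: False
    show ?thesis
    proof (cases "good w")
      case True
      with nb obtain l u where w: "w = l # u" "S l" by (metis good_nonbase list.collapse)
      with True good_S_cons obtain y where "y \<in> X" "l = emb y" "base u" by blast
      then show ?thesis using w v oneX by (auto simp add: act_cons R_fib coef_def)
    next
      case False then show ?thesis using v by (auto simp: act_bad valt_def)
    qed
  qed
qed

lemma act_mult: "act (a * b) v = act a (act b v)"
  by (rule act_cong) (simp add: fib_act mult.assoc)

lemma act_add: "act (a + b) v = ncadd (act a v) (act b v)"
  by (auto simp: act_def ncadd_def distrib_right R_add)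

lemma act_sc: "act (sc k a) v = ncsmult k (act a v)"
  by (auto simp: act_def ncsmult_def scmul1[symmetric] R_scale)

lemma fib_add: "valt good v \<Longrightarrow> valt good v' \<Longrightarrow> fib (\<lambda>w. v w + v' w) u = fib v u + fib v' u"
proof -
  assume "valt good v" "valt good v'"
  have "coef (\<lambda>w. v w + v' w) u = (\<lambda>b. coef v u b + coef v' u b)"
    by (auto simp: coef_def)
  then show ?thesis unfolding fib_def
    using comb_add[OF coef_fin coef_fin, OF \<open>valt good v\<close> \<open>valt good v'\<close>] by simp
qed

lemma fib_scale: "fib (\<lambda>w. k * v w) u = sc k (fib v u)"
proof -
  have "coef (\<lambda>w. k * v w) u = (\<lambda>b. k * coef v u b)"
    by (auto simp: coef_def)
  then show ?thesis unfolding fib_def by (simp add: comb_scale)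
qed

lemma fib_zero: "fib (\<lambda>w. 0) u = 0"
  by (simp add: fib_def coef_def comb_zero)

lemma act_vadd: assumes "valt good v" "valt good v'" shows "act a (ncadd v v') = ncadd (act a v) (act a v')"
  unfolding act_def ncadd_def by (auto simp: fib_add[OF assms] distrib_left R_add)

lemma act_vsc: "act a (ncsmult k v) = ncsmult k (act a v)"
  by (auto simp: act_def ncsmult_def fib_scale scmul2[symmetric] R_scale)

lemma act_vzero: "act a (\<lambda>w. 0) = (\<lambda>w. 0)"
  by (auto simp: act_def fib_zero R_zero)

lemma fib_nz: "fib v u \<noteq> 0 \<Longrightarrow> v u \<noteq> 0 \<or> (\<exists>y\<in>X. v (emb y # u) \<noteq> 0)"
proof (rule ccontr)
  assume "fib v u \<noteq> 0" "\<not> (v u \<noteq> 0 \<or> (\<exists>y\<in>X. v (emb y # u) \<noteq> 0))"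
  then have "comb (coef v u) = comb (\<lambda>b. 0)"
    by (intro comb_cong) (auto simp: coef_def)
  with \<open>fib v u \<noteq> 0\<close> show False by (simp add: fib_def comb_zero)
qed

lemma valt_act: "valt good v \<Longrightarrow> valt good (act a v)"
proof -
  assume v: "valt good v"
  let ?U = "{u. fib v u \<noteq> 0}"
  have "?U \<subseteq> {w. v w \<noteq> 0} \<union> tl ` {w. v w \<noteq> 0}"
  proof
    fix u assume "u \<in> ?U"
    then have "v u \<noteq> 0 \<or> (\<exists>y\<in>X. v (emb y # u) \<noteq> 0)" using fib_nz by auto
    then show "u \<in> {w. v w \<noteq> 0} \<union> tl ` {w. v w \<noteq> 0}"
      by (auto intro: image_eqI[of _ tl "emb _ # u"])
  qed
  then have fU: "finite ?U" using v unfolding valt_def ncfin_def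
    by (meson finite_Un finite_imageI finite_subset)
  have sub: "{w. act a v w \<noteq> 0} \<subseteq> ?U \<union> (\<lambda>(u, y). emb y # u) ` (SIGMA u:?U. {y. R (a * fib v u) y \<noteq> 0})"
  proof
    fix w assume "w \<in> {w. act a v w \<noteq> 0}"
    then have nz: "act a v w \<noteq> 0" by simp
    then have g: "good w" using act_bad by blast
    show "w \<in> ?U \<union> (\<lambda>(u, y). emb y # u) ` (SIGMA u:?U. {y. R (a * fib v u) y \<noteq> 0})"
    proof (cases "base w")
      case True
      then have "fib v w \<noteq> 0" using nz by (auto simp: act_base R_zero)
      then show ?thesis by simp
    next
      case False
      with g obtain l u where w: "w = l # u" "S l" by (metis good_nonbase list.collapse)
      with g good_S_cons obtain y where y: "y \<in> X" "l = emb y" "base u" by blast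
      then have "R (a * fib v u) y \<noteq> 0" using nz w by (simp add: act_cons)
      moreover then have "fib v u \<noteq> 0" by (auto simp: R_zero)
      ultimately show ?thesis using w y by (auto intro!: image_eqI[of _ _ "(u, y)"])
    qed
  qed
  have "finite (?U \<union> (\<lambda>(u, y). emb y # u) ` (SIGMA u:?U. {y. R (a * fib v u) y \<noteq> 0}))"
    using fU R_fin by auto
  then have "ncfin (act a v)" unfolding ncfin_def using sub by (rule finite_subset[rotated])
  moreover have "\<forall>w. act a v w \<noteq> 0 \<longrightarrow> good w" using act_bad by blast
  ultimately show ?thesis by (simp add: valt_def)
qed

lemma act_sum:
  assumes "finite T" "\<And>i. i \<in> T \<Longrightarrow> valt good (f i)"
  shows "act a (\<lambda>x. \<Sum>i\<in>T. k i * f i x) = (\<lambda>x. \<Sum>i\<in>T. k i * act a (f i) x)"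
  using assms
proof (induction T rule: finite_induct)
  case empty then show ?case by (simp add: act_vzero)
next
  case (insert b T)
  have eq: "(\<lambda>x. \<Sum>i\<in>insert b T. k i * f i x) = ncadd (ncsmult (k b) (f b)) (\<lambda>x. \<Sum>i\<in>T. k i * f i x)"
    using insert by (simp add: ncadd_def ncsmult_def)
  have "act a (ncadd (ncsmult (k b) (f b)) (\<lambda>x. \<Sum>i\<in>T. k i * f i x))
      = ncadd (ncsmult (k b) (act a (f b))) (act a (\<lambda>x. \<Sum>i\<in>T. k i * f i x))"
    using insert by (simp add: act_vadd valt_smult valt_sum act_vsc)
  then show ?case using insert eq by (simp add: ncadd_def ncsmult_def)
qed

end



context side begin

lemma base_not_emb': "base u \<Longrightarrow> emb y # w \<noteq> u"
  using base_not_emb by metis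

lemma base_good: "base u \<Longrightarrow> good u" by (simp add: base_def)

lemma X_ne1: "y \<in> X \<Longrightarrow> y \<noteq> 1" using oneX by auto

lemma fib_mono_base:
  assumes "base u" "base u'"
  shows "fib (ncmono u) u' = (if u' = u then 1 else 0)"
proof -
  have "fib (ncmono u) u' = comb (\<lambda>b. if b = 1 \<and> u' = u then 1 else 0)"
    unfolding fib_def
  proof (rule comb_cong)
    fix b assume "b \<in> insert 1 X"
    then show "coef (ncmono u) u' b = (if b = 1 \<and> u' = u then 1 else 0)"
      using assms base_not_emb'[OF assms(1)] X_ne1 by (auto simp: coef_def ncmono_apply)
  qed
  also have "{y\<in>X. (if y = 1 \<and> u' = u then 1 else (0::'f)) \<noteq> 0} = {}"
    using X_ne1 by auto
  then have "comb (\<lambda>b. if b = 1 \<and> u' = u then 1 else 0) = (if u' = u then 1 else 0)"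
    by (simp add: comb_def)
  finally show ?thesis .
qed

lemma fib_mono_cons:
  assumes "x \<in> X" "base u" "base u'"
  shows "fib (ncmono (emb x # u)) u' = (if u' = u then x else 0)"
proof -
  have "fib (ncmono (emb x # u)) u' = comb (\<lambda>b. if b = x \<and> u' = u then 1 else 0)"
    unfolding fib_def
  proof (rule comb_cong)
    fix b assume "b \<in> insert 1 X"
    then show "coef (ncmono (emb x # u)) u' b = (if b = x \<and> u' = u then 1 else 0)"
      using assms base_not_emb[OF assms(3)] X_ne1 emb_inj
      by (auto simp: coef_def ncmono_apply inj_def)
  qed
  also have "\<dots> = sc (if 1 = x \<and> u' = u then 1 else 0) 1 + (\<Sum>y\<in>{x}. sc (if y = x \<and> u' = u then 1 else 0) y)"
    using assms by (intro comb_sum) auto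
  also have "\<dots> = (if u' = u then x else 0)"
    using X_ne1[OF assms(1)] by auto
  finally show ?thesis .
qed

lemma act_mono_cons: "x \<in> X \<Longrightarrow> base u \<Longrightarrow> act a (ncmono (emb x # u)) = act (a * x) (ncmono u)"
  by (rule act_cong) (simp add: fib_mono_cons fib_mono_base)

definition E :: "'c \<Rightarrow> 'l list \<Rightarrow> ('l, 'f) ncpoly" where
  "E a u = ncadd (ncsmult (R a 1) (ncmono u)) (\<lambda>w. \<Sum>y\<in>{y\<in>X. R a y \<noteq> 0}. R a y * ncmono (emb y # u) w)"

lemma act_mono_base:
  assumes u: "base u"
  shows "act a (ncmono u) = E a u"
proof (rule ext)
  fix w
  let ?T = "{y\<in>X. R a y \<noteq> 0}"
  show "act a (ncmono u) w = E a u w"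
  proof (cases "base w")
    case True
    then have "(\<Sum>y\<in>?T. R a y * ncmono (emb y # u) w) = 0"
      using base_not_emb[OF True] by (auto simp: ncmono_apply intro!: sum.neutral)
    then show ?thesis using True u
      by (simp add: act_base fib_mono_base E_def ncadd_def ncsmult_def ncmono_apply R_zero)
  next
    case nb: False
    show ?thesis
    proof (cases "good w")
      case True
      with nb obtain l u' where w: "w = l # u'" "S l" by (metis good_nonbase list.collapse)
      with True good_S_cons obtain y where y: "y \<in> X" "l = emb y" "base u'" by blast
      have "(\<Sum>y'\<in>?T. R a y' * ncmono (emb y' # u) w) = (\<Sum>y'\<in>?T. if y = y' then (if u' = u then R a y else 0) else 0)"
        using w y emb_inj by (intro sum.cong) (auto simp: ncmono_apply inj_def)
      also have "\<dots> = (if u' = u then R a y else 0)"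
        using R_fin y by (auto simp: sum.delta' intro: rev_finite_subset)
      finally have s: "(\<Sum>y'\<in>?T. R a y' * ncmono (emb y' # u) w) = (if u' = u then R a y else 0)" .
      have "(ncmono u w :: 'f) = 0" using nb u by (auto simp: ncmono_apply)
      then show ?thesis using s w y u
        by (auto simp: act_cons fib_mono_base E_def ncadd_def ncsmult_def R_zero)
    next
      case False
      then have "(\<Sum>y\<in>?T. R a y * ncmono (emb y # u) w) = 0"
        using base_emb_cons[OF _ u] by (auto simp: ncmono_apply intro!: sum.neutral)
      moreover have "(ncmono u w :: 'f) = 0" using False u by (auto simp: ncmono_apply base_def)
      ultimately show ?thesis using False
        unfolding E_def ncadd_def ncsmult_def by (simp add: act_bad)
    qed
  qed
qed

lemma act_basis_base:
  assumes y0: "y0 \<in> X" and u: "base u"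
  shows "act y0 (ncmono u) = ncmono (emb y0 # u)"
proof -
  have R1: "R y0 1 = 0" using R_basis[of y0] y0 X_ne1 by auto
  have T: "{y\<in>X. R y0 y \<noteq> 0} = {y0}" using R_basis[of y0] y0 by auto
  show ?thesis using u R1 T R_basis[of y0] y0
    by (auto simp: act_mono_base E_def ncadd_def ncsmult_def)
qed

lemma act_len:
  assumes v: "valt good v" and n: "\<And>w. v w \<noteq> 0 \<Longrightarrow> length w \<le> n" and nz: "act a v w \<noteq> 0"
  shows "length w \<le> Suc n"
proof (cases "base w")
  case True
  then have "fib v w \<noteq> 0" using nz by (auto simp: act_base R_zero)
  then have "v w \<noteq> 0 \<or> (\<exists>y\<in>X. v (emb y # w) \<noteq> 0)" by (rule fib_nz)
  then show ?thesis using n by fastforce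
next
  case False
  have g: "good w" using nz act_bad by blast
  with False obtain l u where w: "w = l # u" "S l" by (metis good_nonbase list.collapse)
  with g good_S_cons obtain y where y: "y \<in> X" "l = emb y" "base u" by blast
  then have "fib v u \<noteq> 0" using nz w by (auto simp: act_cons R_zero)
  then have "v u \<noteq> 0 \<or> (\<exists>y\<in>X. v (emb y # u) \<noteq> 0)" by (rule fib_nz)
  then show ?thesis using n w by fastforce
qed

lemma act_basis_nonbase:
  assumes y0: "y0 \<in> X" and g: "good u" and nb: "\<not> base u" and nz: "act y0 (ncmono u) w \<noteq> 0"
  shows "length w \<le> length u"
proof -
  from g nb obtain l u' where w: "u = l # u'" "S l" by (metis good_nonbase list.collapse)
  with g good_S_cons obtain x where x: "x \<in> X" "l = emb x" "base u'" by blast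
  have "act (y0 * x) (ncmono u') w \<noteq> 0" using nz w x by (simp add: act_mono_cons)
  moreover have n: "\<And>w'. (ncmono u' w' :: 'f) \<noteq> 0 \<Longrightarrow> length w' \<le> length u'"
    by (auto simp: ncmono_apply split: if_splits)
  ultimately have "length w \<le> Suc (length u')"
    using act_len[OF valt_mono[of good u', OF base_good[OF x(3)]] n] by blast
  then show ?thesis using w by simp
qed

lemma gen_zero: "ideq Rel (ncgen (emb 0)) (\<lambda>w. 0)"
proof -
  have "ncsub (ncgen (emb (sc 0 0))) (ncsmult 0 (ncgen (emb 0))) \<in> nc_ideal Rel" by (rule rel_sc)
  then show ?thesis by (simp add: ideq_def ncsmult_def)
qed

lemma gen_sum:
  assumes "finite T"
  shows "ideq Rel (ncgen (emb (\<Sum>y\<in>T. sc (f y) y))) (\<lambda>w. \<Sum>y\<in>T. f y * ncgen (emb y) w)"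
  using assms
proof (induction T rule: finite_induct)
  case empty then show ?case by (simp add: gen_zero)
next
  case (insert b T)
  have 1: "ideq Rel (ncgen (emb (sc (f b) b + (\<Sum>y\<in>T. sc (f y) y))))
     (ncadd (ncgen (emb (sc (f b) b))) (ncgen (emb (\<Sum>y\<in>T. sc (f y) y))))"
    unfolding ideq_def by (rule rel_add)
  have 2: "ideq Rel (ncgen (emb (sc (f b) b))) (ncsmult (f b) (ncgen (emb b)))"
    unfolding ideq_def by (rule rel_sc)
  have 3: "ideq Rel (ncadd (ncgen (emb (sc (f b) b))) (ncgen (emb (\<Sum>y\<in>T. sc (f y) y))))
     (ncadd (ncsmult (f b) (ncgen (emb b))) (\<lambda>w. \<Sum>y\<in>T. f y * ncgen (emb y) w))"
    by (rule ideq_add[OF 2 insert.IH])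
  have 4: "ideq Rel (ncgen (emb (sc (f b) b + (\<Sum>y\<in>T. sc (f y) y))))
     (ncadd (ncsmult (f b) (ncgen (emb b))) (\<lambda>w. \<Sum>y\<in>T. f y * ncgen (emb y) w))"
    by (rule ideq_trans[OF 1 3])
  have 5: "(\<Sum>y\<in>insert b T. sc (f y) y) = sc (f b) b + (\<Sum>y\<in>T. sc (f y) y)"
    using insert.hyps by simp
  have 6: "(\<lambda>w. \<Sum>y\<in>insert b T. f y * ncgen (emb y) w) = ncadd (ncsmult (f b) (ncgen (emb b))) (\<lambda>w. \<Sum>y\<in>T. f y * ncgen (emb y) w)"
    using insert.hyps by (simp add: ncadd_def ncsmult_def)
  show ?case unfolding 5 6 by (rule 4)
qed

lemma gen_R:
  "ideq Rel (ncgen (emb a))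
     (ncadd (ncsmult (R a 1) (ncmono [])) (\<lambda>w. \<Sum>y\<in>{y\<in>X. R a y \<noteq> 0}. R a y * ncgen (emb y) w))"
proof -
  let ?T = "{y\<in>X. R a y \<noteq> 0}"
  have fT: "finite ?T" using R_fin by (rule rev_finite_subset) auto
  have a: "a = sc (R a 1) 1 + (\<Sum>y\<in>?T. sc (R a y) y)"
    using comb_R[of a] by (simp add: comb_def)
  have 1: "ideq Rel (ncgen (emb (sc (R a 1) 1 + (\<Sum>y\<in>?T. sc (R a y) y))))
     (ncadd (ncgen (emb (sc (R a 1) 1))) (ncgen (emb (\<Sum>y\<in>?T. sc (R a y) y))))"
    unfolding ideq_def by (rule rel_add)
  have 2: "ideq Rel (ncgen (emb (sc (R a 1) 1))) (ncsmult (R a 1) (ncgen (emb 1)))"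
    unfolding ideq_def by (rule rel_sc)
  have 3: "ideq Rel (ncsmult (R a 1) (ncgen (emb 1))) (ncsmult (R a 1) (ncmono []))"
    by (rule ideq_smult) (unfold ideq_def, rule rel_one)
  have 4: "ideq Rel (ncadd (ncgen (emb (sc (R a 1) 1))) (ncgen (emb (\<Sum>y\<in>?T. sc (R a y) y))))
     (ncadd (ncsmult (R a 1) (ncmono [])) (\<lambda>w. \<Sum>y\<in>?T. R a y * ncgen (emb y) w))"
    by (rule ideq_add[OF ideq_trans[OF 2 3] gen_sum[OF fT]])
  have "ideq Rel (ncgen (emb (sc (R a 1) 1 + (\<Sum>y\<in>?T. sc (R a y) y))))
     (ncadd (ncsmult (R a 1) (ncmono [])) (\<lambda>w. \<Sum>y\<in>?T. R a y * ncgen (emb y) w))"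
    by (rule ideq_trans[OF 1 4])
  then show ?thesis using a by simp
qed

lemma key_base:
  assumes u: "base u"
  shows "ideq Rel (ncmono (emb a # u)) (act a (ncmono u))"
proof -
  let ?T = "{y\<in>X. R a y \<noteq> 0}"
  have 1: "ideq Rel (ncmul (ncgen (emb a)) (ncmono u))
    (ncmul (ncadd (ncsmult (R a 1) (ncmono [])) (\<lambda>w. \<Sum>y\<in>?T. R a y * ncgen (emb y) w)) (ncmono u))"
    by (rule ideq_rmul[OF gen_R ncfin_mono])
  have 2: "ncmul (ncadd (ncsmult (R a 1) (ncmono [])) (\<lambda>w. \<Sum>y\<in>?T. R a y * ncgen (emb y) w)) (ncmono u)
      = E a u"
    unfolding E_def ncmul_add_left ncmul_smult_left ncmul_e_left ncmul_sum_left ncmul_gen_mono ..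
  have 3: "ncmul (ncgen (emb a)) (ncmono u) = (ncmono (emb a # u) :: ('l, 'f) ncpoly)"
    by (rule ncmul_gen_mono)
  show ?thesis using 1 unfolding 2 3 act_mono_base[OF u] .
qed

lemma key_mono:
  assumes g: "good u"
  shows "ideq Rel (ncmono (emb a # u)) (act a (ncmono u))"
proof (cases "base u")
  case True then show ?thesis by (rule key_base)
next
  case nb: False
  from g nb obtain l u' where w: "u = l # u'" "S l" by (metis good_nonbase list.collapse)
  with g good_S_cons obtain x where x: "x \<in> X" "l = emb x" "base u'" by blast
  have eq: "(ncmono (emb a # u) :: ('l, 'f) ncpoly) = ncmul (ncmul (ncgen (emb a)) (ncgen (emb x))) (ncmono u')"
    using w x by (simp add: ncmul_gen_gen ncmul_mono_mono)
  have r: "ideq Rel (ncgen (emb (a * x))) (ncmul (ncgen (emb a)) (ncgen (emb x)))"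
    unfolding ideq_def by (rule rel_mul)
  have 1: "ideq Rel (ncmul (ncmul (ncgen (emb a)) (ncgen (emb x))) (ncmono u')) (ncmul (ncgen (emb (a * x))) (ncmono u'))"
    by (rule ideq_rmul[OF ideq_sym[OF r] ncfin_mono])
  have 2: "ncmul (ncgen (emb (a * x))) (ncmono u') = (ncmono (emb (a * x) # u') :: ('l, 'f) ncpoly)"
    by (rule ncmul_gen_mono)
  have 3: "ideq Rel (ncmono (emb (a * x) # u')) (act (a * x) (ncmono u'))"
    by (rule key_base[OF x(3)])
  have 4: "act (a * x) (ncmono u') = act a (ncmono u)"
    using w x by (simp add: act_mono_cons)
  show ?thesis unfolding eq using ideq_trans[OF 1[unfolded 2] 3[unfolded 4]] .
qed

lemma key:
  assumes v: "valt good v"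
  shows "ideq Rel (ncmul (ncgen (emb a)) v) (act a v)"
proof -
  have fin: "finite (supp v)" using v by (simp add: valt_def ncfin_supp)
  have vg: "w \<in> supp v \<Longrightarrow> good w" for w using v by (auto simp: valt_def supp_def)
  have ve: "v = (\<lambda>x. \<Sum>w\<in>supp v. v w * ncmono w x)" using v by (intro poly_expand) (simp add: valt_def)
  have l: "ncmul (ncgen (emb a)) (\<lambda>x. \<Sum>w\<in>supp v. v w * ncmono w x) = (\<lambda>x. \<Sum>w\<in>supp v. v w * ncmono (emb a # w) x)"
    by (simp only: ncmul_sum_right ncmul_gen_mono)
  have r: "act a (\<lambda>x. \<Sum>w\<in>supp v. v w * ncmono w x) = (\<lambda>x. \<Sum>w\<in>supp v. v w * act a (ncmono w) x)"
    by (rule act_sum[OF fin valt_mono[of good, OF vg]])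
  have "ideq Rel (\<lambda>x. \<Sum>w\<in>supp v. v w * ncmono (emb a # w) x) (\<lambda>x. \<Sum>w\<in>supp v. v w * act a (ncmono w) x)"
    by (rule ideq_sum[OF fin key_mono[OF vg]])
  then have "ideq Rel (ncmul (ncgen (emb a)) (\<lambda>x. \<Sum>w\<in>supp v. v w * ncmono w x)) (act a (\<lambda>x. \<Sum>w\<in>supp v. v w * ncmono w x))"
    unfolding l r .
  then show ?thesis using ve by simp
qed

end



fun alt :: "('a + 'b) list \<Rightarrow> bool" where
  "alt [] = True"
| "alt [l] = True"
| "alt (l # m # r) = (isl l \<noteq> isl m \<and> alt (m # r))"

definition okl :: "'a set \<Rightarrow> 'b set \<Rightarrow> 'a + 'b \<Rightarrow> bool" where
  "okl Xa Xb l = (case l of Inl x \<Rightarrow> x \<in> Xa | Inr y \<Rightarrow> y \<in> Xb)"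

definition goodw :: "'a set \<Rightarrow> 'b set \<Rightarrow> ('a + 'b) list \<Rightarrow> bool" where
  "goodw Xa Xb w \<longleftrightarrow> alt w \<and> (\<forall>l\<in>set w. okl Xa Xb l)"

lemma goodw_nil[simp]: "goodw Xa Xb []" by (simp add: goodw_def)

lemma alt_cons: "alt (l # u) \<longleftrightarrow> alt u \<and> (u = [] \<or> isl l \<noteq> isl (hd u))"
  by (cases u) auto

lemma goodw_cons: "goodw Xa Xb (l # u) \<longleftrightarrow> okl Xa Xb l \<and> goodw Xa Xb u \<and> (u = [] \<or> isl l \<noteq> isl (hd u))"
  by (auto simp: goodw_def alt_cons)

lemma goodw_snoc: "goodw Xa Xb (w @ [l]) \<longleftrightarrow> goodw Xa Xb w \<and> okl Xa Xb l \<and> (w = [] \<or> isl (last w) \<noteq> isl l)"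
proof (induction w)
  case Nil then show ?case by (simp add: goodw_cons)
next
  case (Cons m w)
  show ?case
  proof (cases w)
    case Nil then show ?thesis by (auto simp: goodw_cons)
  next
    case (Cons m' w')
    then show ?thesis using Cons.IH by (auto simp: goodw_cons)
  qed
qed

lemma sum_single:
  assumes "finite W" "w0 \<in> W" "\<And>w. w \<in> W \<Longrightarrow> w \<noteq> w0 \<Longrightarrow> f w = (0::'f::comm_monoid_add)"
  shows "sum f W = f w0"
proof -
  have "sum f W = f w0 + sum f (W - {w0})" using assms by (simp add: sum.remove)
  also have "sum f (W - {w0}) = 0" using assms by (intro sum.neutral) auto
  finally show ?thesis by simp
qed

locale fp = A: side sA Xa Inl isl "goodw Xa Xb" "fp_relations sA sB"
  + B: side sB Xb Inr "\<lambda>l. \<not> isl l" "goodw Xa Xb" "fp_relations sA sB"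
  for sA :: "'f::field \<Rightarrow> 'a::ring_1 \<Rightarrow> 'a" and sB :: "'f \<Rightarrow> 'b::ring_1 \<Rightarrow> 'b"
  and Xa :: "'a set" and Xb :: "'b set"
begin

abbreviation G where "G \<equiv> goodw Xa Xb"
abbreviation Rl where "Rl \<equiv> fp_relations sA sB"

definition lact :: "'a + 'b \<Rightarrow> ('a + 'b, 'f) ncpoly \<Rightarrow> ('a + 'b, 'f) ncpoly" where
  "lact l v = (case l of Inl a \<Rightarrow> A.act a v | Inr b \<Rightarrow> B.act b v)"

definition wact :: "('a + 'b) list \<Rightarrow> ('a + 'b, 'f) ncpoly \<Rightarrow> ('a + 'b, 'f) ncpoly" where
  "wact w v = foldr lact w v"

definition rho :: "('a + 'b, 'f) ncpoly \<Rightarrow> ('a + 'b, 'f) ncpoly \<Rightarrow> ('a + 'b, 'f) ncpoly" where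
  "rho p v = (\<lambda>x. \<Sum>w\<in>supp p. p w * wact w v x)"

lemma wact_nil[simp]: "wact [] v = v" by (simp add: wact_def)
lemma wact_cons[simp]: "wact (l # w) v = lact l (wact w v)" by (simp add: wact_def)
lemma wact_append: "wact (u @ w) v = wact u (wact w v)" by (simp add: wact_def)

lemma valt_lact: "valt G v \<Longrightarrow> valt G (lact l v)"
  by (cases l) (simp_all add: lact_def A.valt_act B.valt_act)

lemma lact_sum:
  "finite T \<Longrightarrow> (\<And>i. i \<in> T \<Longrightarrow> valt G (f i)) \<Longrightarrow>
   lact l (\<lambda>x. \<Sum>i\<in>T. k i * f i x) = (\<lambda>x. \<Sum>i\<in>T. k i * lact l (f i) x)"
  by (cases l) (simp_all add: lact_def A.act_sum B.act_sum)

lemma lact_zero: "lact l (\<lambda>w. 0) = (\<lambda>w. 0)"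
  by (cases l) (simp_all add: lact_def A.act_vzero B.act_vzero)

lemma valt_wact: "valt G v \<Longrightarrow> valt G (wact w v)"
  by (induction w) (simp_all add: valt_lact)

lemma wact_zero: "wact w (\<lambda>w. 0) = (\<lambda>w. 0)"
  by (induction w) (simp_all add: lact_zero)

lemma wact_sum:
  "finite T \<Longrightarrow> (\<And>i. i \<in> T \<Longrightarrow> valt G (f i)) \<Longrightarrow>
   wact w (\<lambda>x. \<Sum>i\<in>T. k i * f i x) = (\<lambda>x. \<Sum>i\<in>T. k i * wact w (f i) x)"
  by (induction w) (simp_all add: lact_sum valt_wact)

lemma rho_T:
  assumes "finite T" "supp p \<subseteq> T"
  shows "rho p v = (\<lambda>x. \<Sum>w\<in>T. p w * wact w v x)"
proof (rule ext)
  fix x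
  show "rho p v x = (\<Sum>w\<in>T. p w * wact w v x)"
    unfolding rho_def using assms by (intro sum.mono_neutral_left) (auto simp: supp_def)
qed

lemma rho_mono: "rho (ncmono u) v = wact u v"
proof -
  have "rho (ncmono u) v = (\<lambda>x. \<Sum>w\<in>{u}. ncmono u w * wact w v x)"
    by (rule rho_T) (auto simp: supp_def ncmono_apply)
  then show ?thesis by (simp add: ncmono_apply)
qed

lemma rho_gen: "rho (ncgen l) v = lact l v"
  by (simp add: ncgen_def rho_mono)

lemma rho_zero: "rho (\<lambda>w. 0) v = (\<lambda>w. 0)"
  by (simp add: rho_def supp_def)

lemma rho_add:
  assumes "ncfin p" "ncfin q"
  shows "rho (ncadd p q) v = ncadd (rho p v) (rho q v)"
proof -
  let ?T = "supp p \<union> supp q"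
  have fT: "finite ?T" using assms by (simp add: ncfin_supp)
  have "rho (ncadd p q) v = (\<lambda>x. \<Sum>w\<in>?T. ncadd p q w * wact w v x)"
    using fT by (intro rho_T) (auto simp: supp_def ncadd_def)
  moreover have "rho p v = (\<lambda>x. \<Sum>w\<in>?T. p w * wact w v x)" using fT by (intro rho_T) auto
  moreover have "rho q v = (\<lambda>x. \<Sum>w\<in>?T. q w * wact w v x)" using fT by (intro rho_T) auto
  ultimately show ?thesis by (simp add: ncadd_def distrib_right sum.distrib)
qed

lemma rho_sub:
  assumes "ncfin p" "ncfin q"
  shows "rho (ncsub p q) v = ncsub (rho p v) (rho q v)"
proof -
  let ?T = "supp p \<union> supp q"
  have fT: "finite ?T" using assms by (simp add: ncfin_supp)
  have "rho (ncsub p q) v = (\<lambda>x. \<Sum>w\<in>?T. ncsub p q w * wact w v x)"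
    using fT by (intro rho_T) (auto simp: supp_def ncsub_def)
  moreover have "rho p v = (\<lambda>x. \<Sum>w\<in>?T. p w * wact w v x)" using fT by (intro rho_T) auto
  moreover have "rho q v = (\<lambda>x. \<Sum>w\<in>?T. q w * wact w v x)" using fT by (intro rho_T) auto
  ultimately show ?thesis by (simp add: ncsub_def left_diff_distrib sum_subtractf)
qed

lemma rho_smult:
  assumes "ncfin p"
  shows "rho (ncsmult k p) v = ncsmult k (rho p v)"
proof -
  have fT: "finite (supp p)" using assms by (simp add: ncfin_supp)
  have "rho (ncsmult k p) v = (\<lambda>x. \<Sum>w\<in>supp p. ncsmult k p w * wact w v x)"
    using fT by (intro rho_T) (auto simp: supp_def ncsmult_def)
  then show ?thesis by (simp add: rho_def ncsmult_def sum_distrib_left mult.assoc)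
qed

lemma valt_rho: "ncfin p \<Longrightarrow> valt G v \<Longrightarrow> valt G (rho p v)"
  unfolding rho_def by (intro valt_sum valt_wact) (auto simp: ncfin_supp)

lemma supp_mul: "supp (ncmul p q) \<subseteq> (\<lambda>(u, w). u @ w) ` (supp p \<times> supp q)"
proof
  fix t assume "t \<in> supp (ncmul p q)"
  then have "(\<Sum>(u, v)\<in>{(u, v). u @ v = t}. p u * q v) \<noteq> 0" by (simp add: ncmul_def supp_def)
  then obtain x where "x \<in> {(u, v). u @ v = t}" "(case x of (u, v) \<Rightarrow> p u * q v) \<noteq> 0"
    by (meson sum.not_neutral_contains_not_neutral)
  then obtain u w where "u @ w = t" "p u * q w \<noteq> 0" by auto
  then show "t \<in> (\<lambda>(u, w). u @ w) ` (supp p \<times> supp q)" by (force simp: supp_def)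
qed

lemma rho_mul:
  assumes p: "ncfin p" and q: "ncfin q" and v: "valt G v"
  shows "rho (ncmul p q) v = rho p (rho q v)"
proof (rule ext)
  fix x
  let ?S = "supp p \<times> supp q"
  let ?g = "\<lambda>(u, w). u @ w"
  let ?T = "?g ` ?S"
  have fS: "finite ?S" using p q by (simp add: ncfin_supp)
  then have fT: "finite ?T" by simp
  let ?h = "\<lambda>(u, w). p u * q w * wact (u @ w) v x"
  have "rho (ncmul p q) v x = (\<Sum>t\<in>?T. ncmul p q t * wact t v x)"
    using rho_T[OF fT supp_mul] by simp
  also have "\<dots> = (\<Sum>t\<in>?T. sum ?h {y \<in> ?S. ?g y = t})"
  proof (rule sum.cong[OF refl])
    fix t assume "t \<in> ?T"
    have "ncmul p q t * wact t v x = (\<Sum>(u, w)\<in>{(u, w). u @ w = t}. p u * q w * wact t v x)"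
      by (simp add: ncmul_def sum_distrib_right case_prod_unfold)
    also have "\<dots> = (\<Sum>(u, w)\<in>{y \<in> ?S. ?g y = t}. p u * q w * wact t v x)"
      by (intro sum.mono_neutral_right) (auto simp: supp_def)
    also have "\<dots> = sum ?h {y \<in> ?S. ?g y = t}"
      by (intro sum.cong) auto
    finally show "ncmul p q t * wact t v x = sum ?h {y \<in> ?S. ?g y = t}" .
  qed
  also have "\<dots> = sum ?h ?S"
    by (rule sum.group[OF fS fT]) auto
  also have "\<dots> = (\<Sum>u\<in>supp p. \<Sum>w\<in>supp q. p u * q w * wact u (wact w v) x)"
    by (simp add: sum.cartesian_product wact_append)
  also have "\<dots> = rho p (rho q v) x"
    unfolding rho_def[of p]
    by (subst rho_def, subst wact_sum)
       (use q v in \<open>auto simp: ncfin_supp valt_wact sum_distrib_left mult.assoc\<close>)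
  finally show "rho (ncmul p q) v x = rho p (rho q v) x" .
qed

lemma rel_fin: "r \<in> Rl \<Longrightarrow> ncfin r"
  unfolding fp_relations_def by (auto simp: ncgen_def)

lemma I_fin': "p \<in> nc_ideal Rl \<Longrightarrow> ncfin p"
  by (rule I_fin[OF rel_fin])

lemma rho_rel:
  assumes r: "r \<in> Rl" and v: "valt G v"
  shows "rho r v = (\<lambda>w. 0)"
proof -
  have k: "rho (ncsub P Q) v = (\<lambda>w. 0)" if "ncfin P" "ncfin Q" "rho P v = rho Q v" for P Q
  proof -
    have "rho (ncsub P Q) v = ncsub (rho P v) (rho Q v)" using that by (intro rho_sub)
    then show ?thesis using that by (simp add: ncsub_def)
  qed
  have 1: "rho (ncsub (ncgen (Inl (x + y))) (ncadd (ncgen (Inl x)) (ncgen (Inl y)))) v = (\<lambda>w. 0)" for x y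
    by (rule k) (simp_all add: rho_add rho_gen lact_def A.act_add)
  have 2: "rho (ncsub (ncgen (Inl (sA c x))) (ncsmult c (ncgen (Inl x)))) v = (\<lambda>w. 0)" for c x
    by (rule k) (simp_all add: rho_smult rho_gen lact_def A.act_sc)
  have 3: "rho (ncsub (ncgen (Inl (x * y))) (ncmul (ncgen (Inl x)) (ncgen (Inl y)))) v = (\<lambda>w. 0)" for x y
    by (rule k) (simp_all add: ncmul_gen_gen rho_mono rho_gen lact_def A.act_mult)
  have 4: "rho (ncsub (ncgen (Inl 1)) (ncmono [])) v = (\<lambda>w. 0)"
    by (rule k) (simp_all add: rho_mono rho_gen lact_def A.act_one[OF v])
  have 5: "rho (ncsub (ncgen (Inr (x + y))) (ncadd (ncgen (Inr x)) (ncgen (Inr y)))) v = (\<lambda>w. 0)" for x y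
    by (rule k) (simp_all add: rho_add rho_gen lact_def B.act_add)
  have 6: "rho (ncsub (ncgen (Inr (sB c x))) (ncsmult c (ncgen (Inr x)))) v = (\<lambda>w. 0)" for c x
    by (rule k) (simp_all add: rho_smult rho_gen lact_def B.act_sc)
  have 7: "rho (ncsub (ncgen (Inr (x * y))) (ncmul (ncgen (Inr x)) (ncgen (Inr y)))) v = (\<lambda>w. 0)" for x y
    by (rule k) (simp_all add: ncmul_gen_gen rho_mono rho_gen lact_def B.act_mult)
  have 8: "rho (ncsub (ncgen (Inr 1)) (ncmono [])) v = (\<lambda>w. 0)"
    by (rule k) (simp_all add: rho_mono rho_gen lact_def B.act_one[OF v])
  from r show ?thesis unfolding fp_relations_def
    using 1 2 3 4 5 6 7 8 by blast
qed

lemma rho_I: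
  "p \<in> nc_ideal Rl \<Longrightarrow> valt G v \<Longrightarrow> rho p v = (\<lambda>w. 0)"
proof (induction p arbitrary: v rule: nc_ideal.induct)
  case (gen r) then show ?case by (rule rho_rel)
next
  case zero then show ?case by (simp add: rho_zero)
next
  case (add p q)
  have "rho (ncadd p q) v = ncadd (rho p v) (rho q v)" using add.hyps by (intro rho_add I_fin')
  then show ?case using add by (simp add: ncadd_def)
next
  case (lmul p a)
  then have "rho (ncmul a p) v = rho a (rho p v)" by (intro rho_mul) (simp_all add: I_fin')
  then show ?case using lmul by (simp add: rho_def wact_zero)
next
  case (rmul p a)
  then have "rho (ncmul p a) v = rho p (rho a v)" by (intro rho_mul) (simp_all add: I_fin')
  then show ?case using rmul by (simp add: valt_rho)
qed

lemma mono_wact: "ideq Rl (ncmono w) (wact w (ncmono []))"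
proof (induction w)
  case Nil then show ?case by (simp add: ideq_refl)
next
  case (Cons l w)
  have vw: "valt G (wact w (ncmono []))" by (intro valt_wact valt_mono) simp
  have 1: "ideq Rl (ncmul (ncgen l) (ncmono w)) (ncmul (ncgen l) (wact w (ncmono [])))"
    by (rule ideq_lmul[OF Cons.IH ncfin_gen])
  have 2: "ideq Rl (ncmul (ncgen l) (wact w (ncmono []))) (lact l (wact w (ncmono [])))"
    by (cases l) (simp_all add: lact_def A.key[OF vw] B.key[OF vw])
  show ?case using ideq_trans[OF 1 2] by (simp add: ncmul_gen_mono)
qed

lemma faithful:
  assumes p: "ncfin p"
  shows "ideq Rl p (rho p (ncmono []))"
proof -
  have fin: "finite (supp p)" using p by (simp add: ncfin_supp)
  have "ideq Rl (\<lambda>x. \<Sum>w\<in>supp p. p w * ncmono w x) (\<lambda>x. \<Sum>w\<in>supp p. p w * wact w (ncmono []) x)"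
    by (rule ideq_sum[OF fin mono_wact])
  then show ?thesis using poly_expand[OF p] by (simp add: rho_def)
qed

end



context fp begin

lemma L_good:
  assumes l: "okl Xa Xb l" and g: "G (l # w)"
  shows "lact l (ncmono w) = ncmono (l # w)"
proof (cases l)
  case (Inl x)
  then have "x \<in> Xa" "A.base w" using l g by (auto simp: okl_def goodw_cons A.base_def)
  then show ?thesis using Inl by (simp add: lact_def A.act_basis_base)
next
  case (Inr y)
  then have "y \<in> Xb" "B.base w" using l g by (auto simp: okl_def goodw_cons B.base_def)
  then show ?thesis using Inr by (simp add: lact_def B.act_basis_base)
qed

lemma L_bad:
  assumes l: "okl Xa Xb l" and g: "G w" and ng: "\<not> G (l # w)" and nz: "lact l (ncmono w) t \<noteq> 0"
  shows "length t \<le> length w"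
proof (cases l)
  case (Inl x)
  then have "x \<in> Xa" "\<not> A.base w" using l g ng by (auto simp: okl_def goodw_cons A.base_def)
  then show ?thesis using Inl nz g A.act_basis_nonbase by (simp add: lact_def)
next
  case (Inr y)
  then have "y \<in> Xb" "\<not> B.base w" using l g ng by (auto simp: okl_def goodw_cons B.base_def)
  then show ?thesis using Inr nz g B.act_basis_nonbase by (simp add: lact_def)
qed

lemma lact_len:
  assumes v: "valt G v" and n: "\<And>w. v w \<noteq> 0 \<Longrightarrow> length w \<le> n" and nz: "lact l v t \<noteq> 0"
  shows "length t \<le> Suc n"
proof (cases l)
  case (Inl x) then show ?thesis using A.act_len[OF v n] nz by (simp add: lact_def)
next
  case (Inr y) then show ?thesis using B.act_len[OF v n] nz by (simp add: lact_def)
qed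

lemma R_lemma:
  assumes l: "okl Xa Xb l"
  shows "G w \<Longrightarrow> (G (w @ [l]) \<longrightarrow> wact w (ncmono [l]) = ncmono (w @ [l])) \<and>
    (\<not> G (w @ [l]) \<longrightarrow> (\<forall>t. wact w (ncmono [l]) t \<noteq> 0 \<longrightarrow> length t \<le> length w))"
proof (induction w)
  case Nil then show ?case using l by (simp add: goodw_cons)
next
  case (Cons m w')
  have gw': "G w'" and om: "okl Xa Xb m" using Cons.prems by (auto simp: goodw_cons)
  note IH = Cons.IH[OF gw']
  show ?case
  proof (intro conjI impI allI)
    assume g: "G ((m # w') @ [l])"
    then have g': "G (w' @ [l])" by (simp add: goodw_cons)
    then have "wact w' (ncmono [l]) = ncmono (w' @ [l])" using IH by simp
    then show "wact (m # w') (ncmono [l]) = ncmono ((m # w') @ [l])"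
      using L_good[OF om] g by simp
  next
    fix t assume ng: "\<not> G ((m # w') @ [l])" and nz: "wact (m # w') (ncmono [l]) t \<noteq> 0"
    show "length t \<le> length (m # w')"
    proof (cases "G (w' @ [l])")
      case True
      then have "wact w' (ncmono [l]) = ncmono (w' @ [l])" using IH by simp
      then have "lact m (ncmono (w' @ [l])) t \<noteq> 0" using nz by simp
      then have "length t \<le> length (w' @ [l])" using L_bad[OF om True] ng by simp
      then show ?thesis by simp
    next
      case False
      then have b: "\<And>t. wact w' (ncmono [l]) t \<noteq> 0 \<Longrightarrow> length t \<le> length w'" using IH by simp
      have v: "valt G (wact w' (ncmono [l]))" using l by (intro valt_wact valt_mono) (simp add: goodw_cons)
      have "lact m (wact w' (ncmono [l])) t \<noteq> 0" using nz by simp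
      then show ?thesis using lact_len[OF v b] by simp
    qed
  qed
qed

lemma main:
  assumes XaNE: "Xa \<noteq> {}" and XbNE: "Xb \<noteq> {}" and z: "ncfin z"
    and cen: "\<And>q. ncfin q \<Longrightarrow> ncsub (ncmul z q) (ncmul q z) \<in> nc_ideal Rl"
    and nt: "\<And>k. ncsub z (ncsmult k (ncmono [])) \<notin> nc_ideal Rl"
  shows "okl Xa Xb l \<Longrightarrow> okl Xa Xb l' \<Longrightarrow> isl l = isl l' \<Longrightarrow> l = l'"
proof -
  define e :: "('a + 'b, 'f) ncpoly" where "e = ncmono []"
  define c where "c = rho z e"
  have ve: "valt G e" unfolding e_def by (intro valt_mono) simp
  have vc: "valt G c" unfolding c_def using z ve by (rule valt_rho)
  have fc: "finite (supp c)" using vc by (simp add: valt_def ncfin_supp)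
  have cg: "w \<in> supp c \<Longrightarrow> G w" for w using vc by (auto simp: valt_def supp_def)
  have zc: "ideq Rl z c" unfolding c_def e_def by (rule faithful[OF z])
  have rz: "rho z v = rho c v" if v: "valt G v" for v
  proof -
    have "rho (ncsub z c) v = (\<lambda>w. 0)" using zc v by (intro rho_I) (simp add: ideq_def)
    moreover have "rho (ncsub z c) v = ncsub (rho z v) (rho c v)" using z vc by (intro rho_sub) (simp_all add: valt_def)
    ultimately show ?thesis by (auto simp: ncsub_def fun_eq_iff)
  qed
  have ceq: "rho c (ncmono [l]) = lact l c" if l: "okl Xa Xb l" for l
  proof -
    let ?g = "ncgen l :: ('a + 'b, 'f) ncpoly"
    have 1: "rho (ncsub (ncmul z ?g) (ncmul ?g z)) e = (\<lambda>w. 0)" using cen ve by (intro rho_I) simp_all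
    have 2: "rho (ncsub (ncmul z ?g) (ncmul ?g z)) e = ncsub (rho z (rho ?g e)) (rho ?g (rho z e))"
      using z ve by (simp add: rho_sub rho_mul)
    have 3: "rho z (rho ?g e) = rho ?g c"
      using 1 2 unfolding c_def by (auto simp: ncsub_def fun_eq_iff)
    have 4: "rho ?g e = ncmono [l]" unfolding e_def rho_gen using L_good[OF l, of "[]"] l
      by (simp add: goodw_cons)
    have 5: "rho z (ncmono [l]) = rho c (ncmono [l])" using l by (intro rz valt_mono) (simp add: goodw_cons)
    show ?thesis using 3 4 5 by (simp add: rho_gen)
  qed
  have lhs: "rho c (ncmono [l]) t = (\<Sum>w\<in>supp c. c w * wact w (ncmono [l]) t)" for l t
    by (simp add: rho_def)
  have rhs: "lact l c t = (\<Sum>w\<in>supp c. c w * lact l (ncmono w) t)" for l t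
  proof -
    have "lact l c = lact l (\<lambda>x. \<Sum>w\<in>supp c. c w * ncmono w x)"
      using poly_expand[of c] vc by (simp add: valt_def)
    also have "\<dots> = (\<lambda>x. \<Sum>w\<in>supp c. c w * lact l (ncmono w) x)"
      using fc cg by (intro lact_sum valt_mono) auto
    finally show ?thesis by simp
  qed
  have "\<exists>w\<in>supp c. w \<noteq> []"
  proof (rule ccontr)
    assume "\<not> (\<exists>w\<in>supp c. w \<noteq> [])"
    then have "c = ncsmult (c []) e"
      by (auto simp: fun_eq_iff supp_def ncsmult_def e_def ncmono_apply)
    then have "ncsub z (ncsmult (c []) (ncmono [])) \<in> nc_ideal Rl" using zc by (simp add: ideq_def e_def)
    then show False using nt by blast
  qed
  then obtain w1 where w1: "w1 \<in> supp c" "w1 \<noteq> []" by blast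
  define n where "n = Max (length ` supp c)"
  have bnd: "w \<in> supp c \<Longrightarrow> length w \<le> n" for w unfolding n_def using fc by simp
  obtain w0 where w0: "w0 \<in> supp c" "length w0 = n"
    unfolding n_def using fc w1 by (metis (mono_tags, lifting) Max_in empty_iff finite_imageI image_iff)
  have "length w1 \<ge> 1" using w1 by (cases w1) auto
  then have n1: "n \<ge> 1" using bnd[OF w1(1)] by simp
  then have w0ne: "w0 \<noteq> []" using w0 by auto
  have cw0: "c w0 \<noteq> 0" using w0 by (simp add: supp_def)
  have gw0: "G w0" using cg w0 by simp
  have A: "last w0 = l" if l: "okl Xa Xb l" and g: "G (l # w0)" for l
  proof (rule ccontr)
    assume ne: "last w0 \<noteq> l"
    let ?t = "l # w0"
    have "lact l c ?t = c w0 * lact l (ncmono w0) ?t"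
      unfolding rhs
    proof (rule sum_single[OF fc w0(1)])
      fix w assume w: "w \<in> supp c" "w \<noteq> w0"
      show "c w * lact l (ncmono w) ?t = 0"
      proof (cases "G (l # w)")
        case True then show ?thesis using w L_good[OF l True] by (simp add: ncmono_apply)
      next
        case False
        have "lact l (ncmono w) ?t = 0"
        proof (rule ccontr)
          assume "lact l (ncmono w) ?t \<noteq> 0"
          then have "length ?t \<le> length w" using L_bad[OF l cg[OF w(1)] False] by blast
          then show False using bnd[OF w(1)] w0 by simp
        qed
        then show ?thesis by simp
      qed
    qed
    also have "\<dots> = c w0" using L_good[OF l g] by (simp add: ncmono_apply)
    finally have r: "lact l c ?t = c w0" .
    have "rho c (ncmono [l]) ?t = 0"
      unfolding lhs
    proof (rule sum.neutral, rule ballI)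
      fix w assume w: "w \<in> supp c"
      show "c w * wact w (ncmono [l]) ?t = 0"
      proof (cases "G (w @ [l])")
        case True
        have "?t \<noteq> w @ [l]"
        proof
          assume "?t = w @ [l]"
          then have "last ?t = l" by simp
          then show False using ne w0ne by simp
        qed
        then show ?thesis using R_lemma[OF l cg[OF w]] True by (simp add: ncmono_apply)
      next
        case False
        have "wact w (ncmono [l]) ?t = 0"
        proof (rule ccontr)
          assume "wact w (ncmono [l]) ?t \<noteq> 0"
          then have "length ?t \<le> length w" using R_lemma[OF l cg[OF w]] False by blast
          then show False using bnd[OF w] w0 by simp
        qed
        then show ?thesis by simp
      qed
    qed
    then show False using ceq[OF l] r cw0 by simp
  qed
  have B: "hd w0 = l" if l: "okl Xa Xb l" and g: "G (w0 @ [l])" for l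
  proof (rule ccontr)
    assume ne: "hd w0 \<noteq> l"
    let ?t = "w0 @ [l]"
    have "rho c (ncmono [l]) ?t = c w0 * wact w0 (ncmono [l]) ?t"
      unfolding lhs
    proof (rule sum_single[OF fc w0(1)])
      fix w assume w: "w \<in> supp c" "w \<noteq> w0"
      show "c w * wact w (ncmono [l]) ?t = 0"
      proof (cases "G (w @ [l])")
        case True then show ?thesis using w R_lemma[OF l cg[OF w(1)]] by (simp add: ncmono_apply)
      next
        case False
        have "wact w (ncmono [l]) ?t = 0"
        proof (rule ccontr)
          assume "wact w (ncmono [l]) ?t \<noteq> 0"
          then have "length ?t \<le> length w" using R_lemma[OF l cg[OF w(1)]] False by blast
          then show False using bnd[OF w(1)] w0 by simp
        qed
        then show ?thesis by simp
      qed
    qed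
    also have "\<dots> = c w0" using R_lemma[OF l gw0] g by (simp add: ncmono_apply)
    finally have r: "rho c (ncmono [l]) ?t = c w0" .
    have "lact l c ?t = 0"
      unfolding rhs
    proof (rule sum.neutral, rule ballI)
      fix w assume w: "w \<in> supp c"
      show "c w * lact l (ncmono w) ?t = 0"
      proof (cases "G (l # w)")
        case True
        have "?t \<noteq> l # w"
        proof
          assume "?t = l # w"
          then have "hd ?t = l" by simp
          then show False using ne w0ne by simp
        qed
        then show ?thesis using L_good[OF l True] by (simp add: ncmono_apply)
      next
        case False
        have "lact l (ncmono w) ?t = 0"
        proof (rule ccontr)
          assume "lact l (ncmono w) ?t \<noteq> 0"
          then have "length ?t \<le> length w" using L_bad[OF l cg[OF w] False] by blast
          then show False using bnd[OF w] w0 by simp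
        qed
        then show ?thesis by simp
      qed
    qed
    then show False using ceq[OF l] r cw0 by simp
  qed
  have oh: "okl Xa Xb (hd w0)" using gw0 w0ne by (auto simp: goodw_def)
  obtain l1 where l1: "okl Xa Xb l1" "isl l1 \<noteq> isl (hd w0)"
  proof (cases "isl (hd w0)")
    case True
    from XbNE obtain y where "y \<in> Xb" by blast
    then show ?thesis using that[of "Inr y"] True by (simp add: okl_def)
  next
    case False
    from XaNE obtain x where "x \<in> Xa" by blast
    then show ?thesis using that[of "Inl x"] False by (simp add: okl_def)
  qed
  have lastl1: "last w0 = l1" using A[OF l1(1)] l1 gw0 w0ne by (simp add: goodw_cons)
  have P: "okl Xa Xb l \<Longrightarrow> (isl l = isl (hd w0) \<and> l = hd w0) \<or> (isl l \<noteq> isl (hd w0) \<and> l = last w0)" for l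
  proof -
    assume l: "okl Xa Xb l"
    show ?thesis
    proof (cases "isl l = isl (hd w0)")
      case True
      then have "G (w0 @ [l])" using l gw0 w0ne lastl1 l1 by (simp add: goodw_snoc)
      then show ?thesis using B[OF l] True by simp
    next
      case False
      then have "G (l # w0)" using l gw0 w0ne by (simp add: goodw_cons)
      then show ?thesis using A[OF l] False by simp
    qed
  qed
  show "okl Xa Xb l \<Longrightarrow> okl Xa Xb l' \<Longrightarrow> isl l = isl l' \<Longrightarrow> l = l'"
    using P[of l] P[of l'] by auto
qed

end



lemma basis_setup:
  fixes sc :: "'f::field \<Rightarrow> 'c::ring_1 \<Rightarrow> 'c"
  assumes ua: "unital_algebra sc" and ng: "is_not_ground_field sc"
  shows "\<exists>X. \<not> module.dependent sc (insert 1 X) \<and> module.span sc (insert 1 X) = UNIV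
    \<and> 1 \<notin> X \<and> X \<noteq> {}"
proof -
  interpret vector_space sc using ua by (simp add: unital_algebra_def)
  have i1: "independent {1::'c}" by simp
  define B where "B = extend_basis {1::'c}"
  have B: "{1} \<subseteq> B" "independent B" "span B = UNIV"
    unfolding B_def using extend_basis_superset[OF i1] independent_extend_basis[OF i1] span_extend_basis[OF i1]
    by auto
  define X where "X = B - {1}"
  have BX: "insert 1 X = B" using B by (auto simp: X_def)
  have "X \<noteq> {}"
  proof
    assume "X = {}"
    then have "span {1} = UNIV" using B BX by simp
    then have "\<forall>x. \<exists>k. x = sc k 1" by (auto simp: span_singleton)
    then show False using ng by (auto simp: is_not_ground_field_def)
  qed
  then show ?thesis using B BX by (intro exI[of _ X]) (auto simp: X_def)
qed

lemma dim_two: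
  fixes sc :: "'f::field \<Rightarrow> 'c::ring_1 \<Rightarrow> 'c"
  assumes vs: "vector_space sc" and i: "\<not> module.dependent sc (insert 1 X)"
    and s: "module.span sc (insert 1 X) = UNIV" and o: "1 \<notin> X" and X: "X = {x0}"
  shows "vector_space.dim sc UNIV = 2"
proof -
  interpret vector_space sc by (rule vs)
  have "dim UNIV = card (insert 1 X)"
    using i s by (intro dim_eq_card) (simp_all add: span_UNIV)
  then show ?thesis using o X by auto
qed

lemma side_A:
  fixes sA :: "'f::field \<Rightarrow> 'a::ring_1 \<Rightarrow> 'a" and sB :: "'f \<Rightarrow> 'b::ring_1 \<Rightarrow> 'b"
  assumes ua: "unital_algebra sA" and i: "\<not> module.dependent sA (insert 1 Xa)"
    and s: "module.span sA (insert 1 Xa) = UNIV" and o: "1 \<notin> Xa"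
  shows "side sA Xa Inl isl (goodw Xa Xb) (fp_relations sA sB)"
proof -
  have vs: "vector_space sA" and sc: "\<And>c x y. sA c (x * y) = sA c x * y" "\<And>c x y. sA c (x * y) = x * sA c y"
    using ua unfolding unital_algebra_def by blast+
  show ?thesis
    apply (rule side.intro[OF vs])
    apply (rule side_axioms.intro)
    subgoal by (rule sc(1))
    subgoal by (rule sc(2))
    subgoal by (rule i)
    subgoal by (rule s)
    subgoal by (rule o)
    subgoal by simp
    subgoal by simp
    subgoal for l u by (cases l) (auto simp: goodw_cons okl_def)
    subgoal by (rule nc_ideal.gen) (unfold fp_relations_def, blast)
    subgoal by (rule nc_ideal.gen) (unfold fp_relations_def, blast)
    subgoal by (rule nc_ideal.gen) (unfold fp_relations_def, blast)
    subgoal by (rule nc_ideal.gen) (unfold fp_relations_def, blast)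
    done
qed

lemma side_B:
  fixes sA :: "'f::field \<Rightarrow> 'a::ring_1 \<Rightarrow> 'a" and sB :: "'f \<Rightarrow> 'b::ring_1 \<Rightarrow> 'b"
  assumes ua: "unital_algebra sB" and i: "\<not> module.dependent sB (insert 1 Xb)"
    and s: "module.span sB (insert 1 Xb) = UNIV" and o: "1 \<notin> Xb"
  shows "side sB Xb Inr (\<lambda>l. \<not> isl l) (goodw Xa Xb) (fp_relations sA sB)"
proof -
  have vs: "vector_space sB" and sc: "\<And>c x y. sB c (x * y) = sB c x * y" "\<And>c x y. sB c (x * y) = x * sB c y"
    using ua unfolding unital_algebra_def by blast+
  show ?thesis
    apply (rule side.intro[OF vs])
    apply (rule side_axioms.intro)
    subgoal by (rule sc(1))
    subgoal by (rule sc(2))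
    subgoal by (rule i)
    subgoal by (rule s)
    subgoal by (rule o)
    subgoal by simp
    subgoal by simp
    subgoal for l u by (cases l) (auto simp: goodw_cons okl_def)
    subgoal by (rule nc_ideal.gen) (unfold fp_relations_def, blast)
    subgoal by (rule nc_ideal.gen) (unfold fp_relations_def, blast)
    subgoal by (rule nc_ideal.gen) (unfold fp_relations_def, blast)
    subgoal by (rule nc_ideal.gen) (unfold fp_relations_def, blast)
    done
qed

theorem mainTheorem15:
  fixes sA :: "'f::field \<Rightarrow> 'a::ring_1 \<Rightarrow> 'a"
    and sB :: "'f \<Rightarrow> 'b::ring_1 \<Rightarrow> 'b"
  assumes "unital_algebra sA" and "unital_algebra sB"
    and "is_not_ground_field sA" and "is_not_ground_field sB"
    and "free_product_center_nontrivial sA sB"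
  shows "vector_space.dim sA UNIV = 2 \<and> vector_space.dim sB UNIV = 2"
proof -
  obtain Xa where Xa: "\<not> module.dependent sA (insert 1 Xa)" "module.span sA (insert 1 Xa) = UNIV"
    "1 \<notin> Xa" "Xa \<noteq> {}"
    using basis_setup[OF assms(1,3)] by blast
  obtain Xb where Xb: "\<not> module.dependent sB (insert 1 Xb)" "module.span sB (insert 1 Xb) = UNIV"
    "1 \<notin> Xb" "Xb \<noteq> {}"
    using basis_setup[OF assms(2,4)] by blast
  interpret fp sA sB Xa Xb
    unfolding fp_def using side_A[OF assms(1) Xa(1-3)] side_B[OF assms(2) Xb(1-3)] by blast
  obtain z where z: "ncfin z" "\<And>q. ncfin q \<Longrightarrow> ncsub (ncmul z q) (ncmul q z) \<in> nc_ideal Rl"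
    "\<And>k. ncsub z (ncsmult k (ncmono [])) \<notin> nc_ideal Rl"
    using assms(5) unfolding free_product_center_nontrivial_def fp_ideal_def by blast
  note M = main[OF Xa(4) Xb(4) z]
  obtain x0 where x0: "x0 \<in> Xa" using Xa(4) by blast
  obtain y0 where y0: "y0 \<in> Xb" using Xb(4) by blast
  have "Xa = {x0}"
  proof -
    have "x \<in> Xa \<Longrightarrow> x = x0" for x using M[of "Inl x" "Inl x0"] x0 by (simp add: okl_def)
    then show ?thesis using x0 by blast
  qed
  moreover have "Xb = {y0}"
  proof -
    have "y \<in> Xb \<Longrightarrow> y = y0" for y using M[of "Inr y" "Inr y0"] y0 by (simp add: okl_def)
    then show ?thesis using y0 by blast
  qed
  ultimately show ?thesis
    using dim_two[OF _ Xa(1-3)] dim_two[OF _ Xb(1-3)] assms(1,2) by (simp add: unital_algebra_def)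
qed


end
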